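(* Let $p$ be an odd prime and let $J$ be a finite family of lattice points in $\mathbb{Z}^2$ (repetitions allowed) with $|J|=3p-2$ or $|J|=3p-1$. If $(p,J)=0$, then $(2p,J)\equiv -1 \pmod p$.
   Context: For a finite family $X$ of lattice points in $\mathbb{Z}^2$ (points may repeat; subsets are subfamilies, i.e. subsets of the index set) and an integer $n\ge 0$, $(n,X)$ denotes the number of $n$-element subfamilies of $X$ whose coordinatewise sum is congruent to $(0,0)$ modulo $p$. *)

theory Defs
  imports "HOL-Number_Theory.Number_Theory"
begin

text \<open>A finite family of lattice points in Z^2 (repetitions allowed) is modelled as a list;
  subfamilies are subsets of the index set {..<length J}.
  zero_sum_count p n J is the number of n-element subfamilies whose coordinatewise sum
  is congruent to (0,0) modulo p.\<close>

definition zero_sum_count :: "nat \<Rightarrow> nat \<Rightarrow> (int \<times> int) list \<Rightarrow> nat" where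
  "zero_sum_count p n J =
     card {I. I \<subseteq> {..<length J} \<and> card I = n \<and>
              [(\<Sum>i\<in>I. fst (J ! i)) = 0] (mod int p) \<and>
              [(\<Sum>i\<in>I. snd (J ! i)) = 0] (mod int p)}"

end

theory Submission imports Defs begin

definition aff :: "nat set \<Rightarrow> (nat set \<Rightarrow> int) \<Rightarrow> bool" where
"aff N f \<longleftrightarrow> (\<exists>c a. \<forall>I\<subseteq>N. f I = c + (\<Sum>i\<in>I. a i))"

definition alt :: "nat set \<Rightarrow> (nat set \<Rightarrow> int) \<Rightarrow> int" where
"alt N g = (\<Sum>I\<in>Pow N. (-1)^card I * g I)"

definition pl :: "(nat set \<Rightarrow> int) list \<Rightarrow> nat set \<Rightarrow> int" where
"pl fs I = prod_list (map (\<lambda>f. f I) fs)"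

lemma pl_simps[simp]: "pl [] I = 1" "pl (f#fs) I = f I * pl fs I" "pl (xs@ys) I = pl xs I * pl ys I"
  "pl (replicate k f) I = f I ^ k"
  by (simp_all add: pl_def prod_list_replicate)

lemma alt_cong: "(\<And>I. I \<subseteq> N \<Longrightarrow> g I = h I) \<Longrightarrow> alt N g = alt N h"
  unfolding alt_def by (rule sum.cong) auto

lemma alt_add: "alt N (\<lambda>I. g I + h I) = alt N g + alt N h"
  unfolding alt_def by (simp add: algebra_simps sum.distrib)
lemma alt_diff: "alt N (\<lambda>I. g I - h I) = alt N g - alt N h"
  unfolding alt_def by (simp add: algebra_simps sum_subtractf)
lemma alt_scal: "alt N (\<lambda>I. d * g I) = d * alt N g"
  unfolding alt_def by (simp add: algebra_simps sum_distrib_left)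
lemma alt_0: "alt N (\<lambda>I. 0) = 0"
  unfolding alt_def by simp

lemma alt_insert:
  assumes "finite N" "x \<notin> N"
  shows "alt (insert x N) g = alt N (\<lambda>I. g I - g (insert x I))"
proof -
  have inj: "inj_on (insert x) (Pow N)"
    using assms(2) by (auto simp: inj_on_def)
  have disj: "Pow N \<inter> insert x ` Pow N = {}" using assms(2) by auto
  have fin: "finite (Pow N)" using assms(1) by simp
  have "alt (insert x N) g = (\<Sum>I\<in>Pow N. (-1)^card I * g I) + (\<Sum>I\<in>insert x ` Pow N. (-1)^card I * g I)"
    unfolding alt_def Pow_insert by (rule sum.union_disjoint) (use fin disj in auto)
  also have "(\<Sum>I\<in>insert x ` Pow N. (-1)^card I * g I) = (\<Sum>I\<in>Pow N. (-1)^card (insert x I) * g (insert x I))"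
    by (rule sum.reindex[OF inj, unfolded comp_def])
  also have "\<dots> = (\<Sum>I\<in>Pow N. - ((-1)^card I * g (insert x I)))"
  proof (rule sum.cong)
    fix I assume "I \<in> Pow N"
    then have "finite I" "x \<notin> I" using assms finite_subset by auto
    then show "(-1)^card (insert x I) * g (insert x I) = - ((-1)^card I * g (insert x I))" by simp
  qed simp
  finally show ?thesis unfolding alt_def by (simp add: sum_negf sum_subtractf[symmetric] algebra_simps)
qed

lemma diff_lemma:
  assumes fin: "finite N"
    and IH: "\<And>fs. \<forall>f\<in>set fs. aff N f \<Longrightarrow> length fs < card N \<Longrightarrow> alt N (pl fs) = 0"
  shows "\<forall>f\<in>set Ls. aff N f \<and> aff N (s f) \<and> (\<exists>d. \<forall>I\<subseteq>N. s f I = f I + d) \<Longrightarrow> \<forall>f\<in>set K. aff N f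
    \<Longrightarrow> length K + length Ls \<le> card N \<Longrightarrow> alt N (\<lambda>I. pl K I * (pl (map s Ls) I - pl Ls I)) = 0"
proof (induction Ls arbitrary: K)
  case Nil
  then show ?case by (simp add: alt_0)
next
  case (Cons L Ls)
  obtain d where d: "\<forall>I\<subseteq>N. s L I = L I + d" using Cons.prems by auto
  have "alt N (\<lambda>I. pl K I * (pl (map s (L#Ls)) I - pl (L#Ls) I)) =
        alt N (\<lambda>I. d * pl (K @ map s Ls) I + pl (K@[L]) I * (pl (map s Ls) I - pl Ls I))"
    by (rule alt_cong) (simp add: d algebra_simps)
  also have "\<dots> = d * alt N (\<lambda>I. pl (K @ map s Ls) I) + alt N (\<lambda>I. pl (K@[L]) I * (pl (map s Ls) I - pl Ls I))"
    by (simp only: alt_add alt_scal)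
  also have "alt N (\<lambda>I. pl (K @ map s Ls) I) = 0"
    by (rule IH) (use Cons.prems in auto)
  also have "alt N (\<lambda>I. pl (K@[L]) I * (pl (map s Ls) I - pl Ls I)) = 0"
    by (rule Cons.IH) (use Cons.prems in auto)
  finally show ?case by simp
qed

lemma alt_zero:
  assumes "finite N"
  shows "\<forall>f\<in>set fs. aff N f \<Longrightarrow> length fs < card N \<Longrightarrow> alt N (pl fs) = 0"
  using assms
proof (induction N arbitrary: fs rule: finite_induct)
  case empty
  then show ?case by simp
next
  case (insert x N)
  define s where "s = (\<lambda>(f::nat set \<Rightarrow> int) I. f (insert x I))"
  have ps: "pl fs (insert x I) = pl (map s fs) I" for I
    by (simp add: pl_def s_def comp_def)
  have props: "\<forall>f\<in>set fs. aff N f \<and> aff N (s f) \<and> (\<exists>d. \<forall>I\<subseteq>N. s f I = f I + d)"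
  proof
    fix f assume "f \<in> set fs"
    then obtain c a where ca: "\<forall>I\<subseteq>insert x N. f I = c + (\<Sum>i\<in>I. a i)"
      using insert.prems unfolding aff_def by blast
    have e1: "f I = c + (\<Sum>i\<in>I. a i)" if "I \<subseteq> N" for I using ca that by auto
    have e2: "s f I = (c + a x) + (\<Sum>i\<in>I. a i)" if "I \<subseteq> N" for I
    proof -
      have "finite I" "x \<notin> I" using that insert.hyps finite_subset by auto
      then show ?thesis using ca[rule_format, of "insert x I"] that unfolding s_def by (auto simp: add.assoc)
    qed
    show "aff N f \<and> aff N (s f) \<and> (\<exists>d. \<forall>I\<subseteq>N. s f I = f I + d)"
      unfolding aff_def using e1 e2 by (metis add.commute add.left_commute)
  qed
  have "alt (insert x N) (pl fs) = alt N (\<lambda>I. pl fs I - pl fs (insert x I))"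
    by (rule alt_insert) (use insert.hyps in auto)
  also have "\<dots> = - alt N (\<lambda>I. pl [] I * (pl (map s fs) I - pl fs I))"
    by (simp add: ps alt_diff)
  also have "alt N (\<lambda>I. pl [] I * (pl (map s fs) I - pl fs I)) = 0"
    by (rule diff_lemma[OF insert.hyps(1)]) (use insert props in auto)
  finally show ?case by simp
qed

lemma fermat_int:
  assumes "prime p" "\<not> int p dvd t"
  shows "[t^(p-1) = 1] (mod int p)"
proof -
  define a where "a = nat (t mod int p)"
  have p0: "int p > 0" using assms(1) prime_gt_0_nat by auto
  have ia: "int a = t mod int p" unfolding a_def using p0 by simp
  have "\<not> p dvd a"
  proof
    assume "p dvd a"
    then have "int p dvd int a" by simp
    then have "int p dvd t mod int p" using ia by simp
    then show False using assms(2) by (simp add: dvd_mod_iff)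
  qed
  then have "[a^(p-1) = 1] (mod p)" using fermat_theorem assms(1) by blast
  then have "[int (a^(p-1)) = int 1] (mod int p)" using cong_int_iff by blast
  then have "[int a^(p-1) = 1] (mod int p)" by simp
  moreover have "[t = int a] (mod int p)" using ia by (simp add: cong_def)
  then have "[t^(p-1) = int a^(p-1)] (mod int p)" by (rule cong_pow)
  ultimately show ?thesis using cong_trans by blast
qed

lemma ind_cong:
  assumes "prime p"
  shows "[1 - t^(p-1) = (if int p dvd t then 1 else 0)] (mod int p)"
proof (cases "int p dvd t")
  case True
  have "p - 1 > 0" using assms prime_gt_1_nat by auto
  then have "int p dvd t^(p-1)" using True dvd_power_iff_le by (metis dvd_power dvd_trans gr0_implies_Suc)
  then have "[t^(p-1) = 0] (mod int p)" by (simp add: cong_0_iff)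
  then have "[1 - t^(p-1) = 1 - 0] (mod int p)" by (intro cong_diff cong_refl)
  then show ?thesis using True by simp
next
  case False
  then have "[t^(p-1) = 1] (mod int p)" using fermat_int assms by blast
  then have "[1 - t^(p-1) = 1 - 1] (mod int p)" by (intro cong_diff cong_refl)
  then show ?thesis using False by simp
qed

lemma alt_ind:
  assumes "finite N" "S \<subseteq> Pow N" "\<And>I. I \<in> S \<Longrightarrow> card I = k"
  shows "alt N (\<lambda>I. of_bool (I \<in> S)) = (-1)^k * int (card S)"
proof -
  have "alt N (\<lambda>I. of_bool (I \<in> S)) = (\<Sum>I\<in>Pow N. if I \<in> S then (-1)^card I else 0)"
    unfolding alt_def by (rule sum.cong) auto
  also have "\<dots> = (\<Sum>I\<in>Pow N \<inter> S. (-1)^card I)"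
    by (rule sum.inter_restrict[symmetric]) (use assms in simp)
  also have "Pow N \<inter> S = S" using assms by auto
  also have "(\<Sum>I\<in>S. (-1::int)^card I) = (\<Sum>I\<in>S. (-1)^k)" using assms(3) by simp
  finally show ?thesis by simp
qed

theorem corollary3:
  fixes p :: nat and J :: "(int \<times> int) list"
  assumes "prime p" and "odd p"
    and "length J = 3 * p - 2 \<or> length J = 3 * p - 1"
    and "zero_sum_count p p J = 0"
  shows "[int (zero_sum_count p (2 * p) J) = -1] (mod int p)"
proof -
  define n where "n = length J"
  define N where "N = {..<n}"
  define A where "A = (\<lambda>I. \<Sum>i\<in>I. fst (J ! i))"
  define B where "B = (\<lambda>I. \<Sum>i\<in>I. snd (J ! i))"
  define C where "C = (\<lambda>I::nat set. \<Sum>i\<in>I. (1::int))"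
  define rA where "rA = replicate (p-1) A"
  define rB where "rB = replicate (p-1) B"
  define rC where "rC = replicate (p-1) C"
  have p2: "p \<ge> 2" using assms(1) prime_ge_2_nat by blast
  have p3: "p \<ge> 3" using p2 assms(2) by presburger
  have cardN: "card N = n" unfolding N_def by simp
  have finN: "finite N" unfolding N_def by simp
  have nge: "n \<ge> 3 * p - 2" "n \<le> 3 * p - 1" using assms(3) unfolding n_def by auto
  have affs: "aff N A" "aff N B" "aff N C" unfolding aff_def A_def B_def C_def
    by (rule exI[of _ 0], rule exI[of _ "\<lambda>i. fst (J ! i)"], simp)
       (rule exI[of _ 0], rule exI[of _ "\<lambda>i. snd (J ! i)"], simp,
        rule exI[of _ 0], rule exI[of _ "\<lambda>_. 1::int"], simp)
  have z: "alt N (pl xs) = 0" if "set xs \<subseteq> {A,B,C}" "length xs \<le> 3 * (p-1)" for xs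
    by (rule alt_zero[OF finN]) (use that affs cardN nge p3 in auto)
  define f where "f = (\<lambda>I. (1 - A I^(p-1)) * (1 - B I^(p-1)) * (1 - C I^(p-1)))"
  have "alt N f = alt N (\<lambda>I. pl [] I - pl rA I - pl rB I - pl rC I + pl (rA@rB) I + pl (rA@rC) I
     + pl (rB@rC) I - pl (rA@rB@rC) I)"
    by (rule alt_cong) (simp add: f_def rA_def rB_def rC_def algebra_simps)
  also have "\<dots> = 0"
    apply (simp only: alt_add alt_diff)
    apply (subst (1 2 3 4 5 6 7 8) z)
    apply (auto simp: rA_def rB_def rC_def)
    done
  finally have f0: "alt N f = 0" .
  define \<delta> where "\<delta> = (\<lambda>I. (if int p dvd A I then 1 else 0) * (if int p dvd B I then 1 else 0)
     * (if int p dvd C I then (1::int) else 0))"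
  have "[alt N f = alt N \<delta>] (mod int p)"
    unfolding alt_def f_def \<delta>_def
    by (intro cong_sum cong_mult cong_refl ind_cong assms(1))
  define S where "S = (\<lambda>k. {I. I \<subseteq> {..<length J} \<and> card I = k \<and>
              [(\<Sum>i\<in>I. fst (J ! i)) = 0] (mod int p) \<and>
              [(\<Sum>i\<in>I. snd (J ! i)) = 0] (mod int p)})"
  have zs: "zero_sum_count p k J = card (S k)" for k unfolding zero_sum_count_def S_def by simp
  have SN: "S k \<subseteq> Pow N" for k unfolding S_def N_def n_def by auto
  have Scard: "I \<in> S k \<Longrightarrow> card I = k" for I k unfolding S_def by auto
  have S0: "S 0 = {{}}"
  proof -
    have "I = {}" if "I \<in> S 0" for I
      using that finite_subset[of I "{..<length J}"] unfolding S_def by auto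
    moreover have "{} \<in> S 0" unfolding S_def by simp
    ultimately show ?thesis by blast
  qed
  have dsplit: "\<delta> I = of_bool (I \<in> S 0) + of_bool (I \<in> S p) + of_bool (I \<in> S (2*p))" if "I \<subseteq> N" for I
  proof -
    have CI: "C I = int (card I)" unfolding C_def by simp
    have cI: "card I \<le> n" using that card_mono[OF finN that] cardN by simp
    have mem: "I \<in> S k \<longleftrightarrow> card I = k \<and> int p dvd A I \<and> int p dvd B I" for k
      using that unfolding S_def A_def B_def N_def n_def by (auto simp: cong_0_iff)
    show ?thesis
    proof (cases "int p dvd A I \<and> int p dvd B I \<and> p dvd card I")
      case True
      then obtain q where q: "card I = p * q" by blast
      have "q < 3"
      proof (rule ccontr)
        assume "\<not> q < 3"
        then have "p * q \<ge> p * 3" by simp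
        then show False using q cI nge p3 by linarith
      qed
      then have "q = 0 \<or> q = 1 \<or> q = 2" by auto
      then show ?thesis using True q p3 unfolding \<delta>_def mem CI by auto
    next
      case False
      then show ?thesis unfolding \<delta>_def mem CI using p3 by (cases "card I = 0") (auto simp del: of_nat_mult)
    qed
  qed
  have "alt N \<delta> = alt N (\<lambda>I. of_bool (I \<in> S 0) + of_bool (I \<in> S p) + of_bool (I \<in> S (2*p)))"
    by (rule alt_cong) (rule dsplit)
  also have "\<dots> = 1 - int (card (S p)) + int (card (S (2*p)))"
  proof -
    have a0: "alt N (\<lambda>I. of_bool (I \<in> S 0)) = 1"
      using alt_ind[OF finN SN[of 0] Scard[of _ 0]] S0 by simp
    have a1: "alt N (\<lambda>I. of_bool (I \<in> S p)) = - int (card (S p))"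
      using alt_ind[OF finN SN[of p] Scard[of _ p]] assms(2) by simp
    have a2: "alt N (\<lambda>I. of_bool (I \<in> S (2*p))) = int (card (S (2*p)))"
      using alt_ind[OF finN SN[of "2*p"] Scard[of _ "2*p"]] by (simp add: power_mult)
    show ?thesis by (simp only: alt_add a0 a1 a2)
  qed
  finally have e\<delta>: "alt N \<delta> = 1 - int (card (S p)) + int (card (S (2*p)))" .
  have cp: "card (S p) = 0" using assms(4) zs[of p] by simp
  have hc: "[alt N f = alt N \<delta>] (mod int p)" by fact
  then have "[0 = 1 + int (card (S (2*p)))] (mod int p)"
    unfolding f0 e\<delta> cp by simp
  then have "int p dvd (0 - (1 + int (card (S (2*p)))))"
    by (simp only: cong_iff_dvd_diff)
  then have "int p dvd (-1) * (0 - (1 + int (card (S (2*p)))))"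
    by (rule dvd_mult)
  moreover have "(-1) * (0 - (1 + int (card (S (2*p))))) = int (card (S (2*p))) - (-1)" by simp
  ultimately have "int p dvd (int (card (S (2*p))) - (-1))" by simp
  then show ?thesis unfolding zs by (simp only: cong_iff_dvd_diff)
qed

end
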